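(* Let $M$ be a holomorphic hypersurface of a Kähler manifold with Norden metric $(M',g,J)$ of dimension $2n+2$, and let $p\in M$. If at $p$ one has $\sigma(x,y)=g(x,y)H-\tilde g(x,y)JH$ for all $x,y\in T_pM$, then $M$ is h-umbilical at $p$ with respect to every vector $\eta$ normal to $M$ at $p$, i.e. $$A_\eta=\frac{\operatorname{trace}A_\eta}{2n}\,I-\frac{\operatorname{trace}(A_\eta\circ J)}{2n}\,J.$$
   Context: A Kähler manifold with Norden metric: manifold $M'$ with almost complex structure $J$, pseudo-Riemannian metric $g$ with $g(JX,JY)=-g(X,Y)$ and $\nabla'J=0$; $\tilde g(X,Y)=g(JX,Y)$. A holomorphic hypersurface is a $2n$-dimensional submanifold $M$ with $J(T_pM)=T_pM$ and $g|_{T_pM}$ nondegenerate, with induced Levi-Civita connection $\nabla$; its second fundamental form $\sigma$ is defined by $\nabla'_XY=\nabla_XY+\sigma(X,Y)$ and its mean curvature vector is $H=\frac1{2n}\operatorname{trace}_g\sigma$. For a vector $\eta$ normal to $M$ at $p$, $A_\eta$ is the endomorphism of $T_pM$ with $g(A_\eta x,y)=g(\sigma(x,y),\eta)$; $I$ is the identity. *)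

theory Defs
  imports "HOL-Analysis.Analysis"
begin

text \<open>Pointwise (tangent-space) setting. The ambient tangent space T_p M' is the
  real vector space of type 'a, the tangent space T_p M is the subspace W.\<close>

definition sub_basis :: "'a::euclidean_space set \<Rightarrow> 'a set" where
  "sub_basis W = (SOME B. B \<subseteq> W \<and> independent B \<and> span B = W)"

definition sub_trace :: "'a::euclidean_space set \<Rightarrow> ('a \<Rightarrow> 'a) \<Rightarrow> real" where
  "sub_trace W f = (let B = sub_basis W in \<Sum>b\<in>B. representation B (f b) b)"

definition g_trace :: "('a::euclidean_space \<Rightarrow> 'a \<Rightarrow> real) \<Rightarrow> 'a set \<Rightarrow> ('a \<Rightarrow> 'a \<Rightarrow> 'b::real_vector) \<Rightarrow> 'b" where
  "g_trace g W s = (let B = sub_basis W;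
      ginv = (SOME h. \<forall>b\<in>B. \<forall>d\<in>B. (\<Sum>c\<in>B. h b c * g c d) = (if b = d then 1 else 0))
    in \<Sum>b\<in>B. \<Sum>c\<in>B. ginv b c *\<^sub>R s b c)"

definition normal_space :: "('a \<Rightarrow> 'a \<Rightarrow> real) \<Rightarrow> 'a set \<Rightarrow> 'a set" where
  "normal_space g W = {v. \<forall>w\<in>W. g v w = 0}"

end

theory Submission
  imports Defs
begin

theorem lemma2p4:
  fixes n :: nat
    and g :: "'a::euclidean_space \<Rightarrow> 'a \<Rightarrow> real"
    and J :: "'a \<Rightarrow> 'a"
    and W :: "'a set"
    and \<sigma> :: "'a \<Rightarrow> 'a \<Rightarrow> 'a"
  assumes n_pos: "n \<ge> 1"
    and dimM': "DIM('a) = 2 * n + 2"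
    and g_bilin: "bilinear g"
    and g_sym: "\<And>x y. g x y = g y x"
    and g_nondeg: "\<And>x. (\<forall>y. g x y = 0) \<Longrightarrow> x = 0"
    and J_lin: "linear J"
    and J_sq: "\<And>x. J (J x) = - x"
    and Norden: "\<And>x y. g (J x) (J y) = - g x y"
    and W_sub: "subspace W"
    and dimM: "dim W = 2 * n"
    and W_J: "\<And>x. x \<in> W \<Longrightarrow> J x \<in> W"
    and W_nondeg: "\<And>x. x \<in> W \<Longrightarrow> (\<forall>y\<in>W. g x y = 0) \<Longrightarrow> x = 0"
    and \<sigma>_normal: "\<And>x y. x \<in> W \<Longrightarrow> y \<in> W \<Longrightarrow> \<sigma> x y \<in> normal_space g W"
    and \<sigma>_sym: "\<And>x y. x \<in> W \<Longrightarrow> y \<in> W \<Longrightarrow> \<sigma> x y = \<sigma> y x"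
    and \<sigma>_lin: "\<And>x. x \<in> W \<Longrightarrow> linear (\<sigma> x)"
    and hyp: "\<And>x y. x \<in> W \<Longrightarrow> y \<in> W \<Longrightarrow>
       \<sigma> x y = g x y *\<^sub>R ((1 / real (2 * n)) *\<^sub>R g_trace g W \<sigma>)
               - g (J x) y *\<^sub>R J ((1 / real (2 * n)) *\<^sub>R g_trace g W \<sigma>)"
  shows "\<forall>\<eta> \<in> normal_space g W. \<forall>A.
           ((\<forall>x\<in>W. A x \<in> W) \<and> (\<forall>x\<in>W. \<forall>y\<in>W. g (A x) y = g (\<sigma> x y) \<eta>)) \<longrightarrow>
           (\<forall>x\<in>W. A x = (sub_trace W A / real (2 * n)) *\<^sub>R x
                        - (sub_trace W (A \<circ> J) / real (2 * n)) *\<^sub>R J x)"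
proof -
  have glin: "linear (\<lambda>x. g x y)" for y using g_bilin by (simp add: bilinear_def)
  have grlin: "linear (g x)" for x using g_bilin by (simp add: bilinear_def)
  have gadd: "g (x + y) z = g x z + g y z" for x y z using linear_add[OF glin] by simp
  have gdiff: "g (x - y) z = g x z - g y z" for x y z using linear_diff[OF glin] by simp
  have gscale: "g (r *\<^sub>R x) z = r * g x z" for r x z using linear_cmul[OF glin] by simp
  have g0: "g 0 z = 0" for z using linear_0[OF glin] by simp
  have gsum: "g (sum f S) z = (\<Sum>a\<in>S. g (f a) z)" for f S z using linear_sum[OF glin] by simp
  have grsum: "g z (sum f S) = (\<Sum>a\<in>S. g z (f a))" for f S z using linear_sum[OF grlin] by simp
  have Jdiff: "J (x - y) = J x - J y" for x y using linear_diff[OF J_lin] by simp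
  have Jscale: "J (r *\<^sub>R x) = r *\<^sub>R J x" for r x using linear_cmul[OF J_lin] by simp
  have J0: "J 0 = 0" using linear_0[OF J_lin] .
  define B where "B = sub_basis W"
  have "\<exists>B. B \<subseteq> W \<and> independent B \<and> span B = W"
  proof -
    obtain B where "B \<subseteq> W" "independent B" "W \<subseteq> span B" "card B = dim W"
      by (rule basis_exists)
    thus ?thesis using span_subspace W_sub by blast
  qed
  hence Bprops: "B \<subseteq> W \<and> independent B \<and> span B = W"
    unfolding B_def sub_basis_def by (rule someI_ex)
  hence BW: "B \<subseteq> W" and Bind: "independent B" and Bspan: "span B = W" by auto
  have Bfin: "finite B" using independent_bound Bind by blast
  have Bcard: "card B = 2 * n" using dim_span_eq_card_independent[OF Bind] Bspan dimM by simp
  have inspan: "v \<in> span B" if "v \<in> W" for v using that Bspan by simp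
  have repsum: "(\<Sum>d\<in>B. representation B v d *\<^sub>R d) = v" if "v \<in> W" for v
    using sum_representation_eq[OF Bind inspan[OF that] Bfin] by simp
  have repbasis: "representation B b d = (if d = b then 1 else 0)" if "b \<in> B" for b d
    using representation_basis[OF Bind that] by simp
  have Wsum: "sum f S \<in> W" if "\<And>x. x \<in> S \<Longrightarrow> f x \<in> W" for f :: "'a \<Rightarrow> 'a" and S
    using subspace_sum[OF W_sub] that by blast
  have Wdiff: "x - y \<in> W" if "x \<in> W" "y \<in> W" for x y using W_sub that by (simp add: subspace_diff)
  have Wscale: "r *\<^sub>R x \<in> W" if "x \<in> W" for r x using W_sub that by (simp add: subspace_scale)
  have Wadd: "x + y \<in> W" if "x \<in> W" "y \<in> W" for x y using W_sub that by (simp add: subspace_add)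
  define \<phi> where "\<phi> w = (\<Sum>d\<in>B. g w d *\<^sub>R d)" for w
  have \<phi>lin: "linear \<phi>"
    unfolding \<phi>_def
    by (rule linearI) (simp_all add: gadd gscale sum.distrib scaleR_add_left scaleR_sum_right)
  have indep0: "\<forall>d\<in>B. c d = 0" if "(\<Sum>d\<in>B. c d *\<^sub>R d) = 0" for c
    using Bind that unfolding independent_explicit by blast
  have \<phi>inj: "inj_on \<phi> W"
  proof (rule inj_onI)
    fix x y assume xW: "x \<in> W" and yW: "y \<in> W" and e: "\<phi> x = \<phi> y"
    have "\<phi> (x - y) = 0" using e linear_diff[OF \<phi>lin] by simp
    hence z: "\<forall>d\<in>B. g (x - y) d = 0" unfolding \<phi>_def by (rule indep0)
    have "\<forall>v\<in>W. g (x - y) v = 0"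
    proof
      fix v assume vW: "v \<in> W"
      have "g (x - y) v = g (x - y) (\<Sum>d\<in>B. representation B v d *\<^sub>R d)"
        using repsum[OF vW] by simp
      also have "\<dots> = 0" using z by (simp add: grsum linear_cmul[OF grlin])
      finally show "g (x - y) v = 0" .
    qed
    hence "x - y = 0" using W_nondeg Wdiff[OF xW yW] by blast
    thus "x = y" by simp
  qed
  have \<phi>W: "\<phi> ` W \<subseteq> W" unfolding \<phi>_def using BW by (auto intro!: Wsum Wscale)
  have \<phi>surj: "\<phi> ` W = W"
    by (rule subspace_dim_equal[OF linear_subspace_image[OF \<phi>lin W_sub] W_sub \<phi>W])
       (use dim_image_eq[OF \<phi>lin, of W] \<phi>inj span_subspace[OF subset_refl span_superset W_sub] in simp)
  have dual: "\<exists>w\<in>W. \<forall>d\<in>B. g w d = (if b = d then 1 else 0)" if bB: "b \<in> B" for b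
  proof -
    have "b \<in> \<phi> ` W" using \<phi>surj bB BW by auto
    then obtain w where wW: "w \<in> W" and wb: "\<phi> w = b" by auto
    have "(\<Sum>d\<in>B. (if b = d then 1 else 0) *\<^sub>R d) = (\<Sum>d\<in>B. if b = d then d else 0)"
      by (intro sum.cong refl) simp
    also have "\<dots> = b" using bB Bfin by (simp add: sum.delta)
    finally have "(\<Sum>d\<in>B. (if b = d then 1 else 0) *\<^sub>R d) = b" .
    hence "(\<Sum>d\<in>B. (g w d - (if b = d then 1 else 0)) *\<^sub>R d) = 0"
      using wb unfolding \<phi>_def by (simp add: scaleR_diff_left sum_subtractf)
    hence "\<forall>d\<in>B. g w d - (if b = d then 1 else 0) = 0" by (rule indep0)
    hence "\<forall>d\<in>B. g w d = (if b = d then 1 else 0)" by simp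
    thus ?thesis using wW by blast
  qed
  then obtain w where wW: "\<And>b. b \<in> B \<Longrightarrow> w b \<in> W"
    and wd: "\<And>b d. b \<in> B \<Longrightarrow> d \<in> B \<Longrightarrow> g (w b) d = (if b = d then 1 else 0)"
    by metis
  have ginv_ex: "\<exists>h. \<forall>b\<in>B. \<forall>d\<in>B. (\<Sum>c\<in>B. h b c * g c d) = (if b = d then 1 else 0)"
  proof (intro exI ballI)
    fix b d assume bB: "b \<in> B" and dB: "d \<in> B"
    have "(\<Sum>c\<in>B. representation B (w b) c * g c d) = g (\<Sum>c\<in>B. representation B (w b) c *\<^sub>R c) d"
      by (simp add: gsum gscale)
    also have "\<dots> = g (w b) d" using repsum[OF wW[OF bB]] by simp
    finally show "(\<Sum>c\<in>B. representation B (w b) c * g c d) = (if b = d then 1 else 0)"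
      using wd[OF bB dB] by simp
  qed
  define ginv where "ginv = (SOME h. \<forall>b\<in>B. \<forall>d\<in>B. (\<Sum>c\<in>B. h b c * g c d) = (if b = d then 1 else 0))"
  have ginvP: "\<And>b d. b \<in> B \<Longrightarrow> d \<in> B \<Longrightarrow> (\<Sum>c\<in>B. ginv b c * g c d) = (if b = d then 1 else 0)"
    using someI_ex[OF ginv_ex] unfolding ginv_def by blast
  define h where "h = (1 / real (2 * n)) *\<^sub>R g_trace g W \<sigma>"
  define tJ where "tJ = (\<Sum>b\<in>B. representation B (J b) b)"
  have hyp': "\<sigma> x y = g x y *\<^sub>R h - g (J x) y *\<^sub>R J h" if "x \<in> W" "y \<in> W" for x y
    using hyp[OF that] unfolding h_def .
  have GT: "g_trace g W \<sigma> = (\<Sum>b\<in>B. \<Sum>c\<in>B. ginv b c *\<^sub>R \<sigma> b c)"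
    unfolding g_trace_def Let_def B_def[symmetric] ginv_def ..
  have S1: "(\<Sum>c\<in>B. ginv b c * g b c) = 1" if bB: "b \<in> B" for b
    using ginvP[OF bB bB] g_sym by (simp add: mult.commute)
  have S2: "(\<Sum>c\<in>B. ginv b c * g (J b) c) = representation B (J b) b" if bB: "b \<in> B" for b
  proof -
    have JbW: "J b \<in> W" using W_J BW bB by auto
    have "(\<Sum>c\<in>B. ginv b c * g (J b) c)
        = (\<Sum>c\<in>B. ginv b c * (\<Sum>d\<in>B. representation B (J b) d * g c d))"
    proof (rule sum.cong[OF refl])
      fix c assume "c \<in> B"
      have "g (J b) c = g (\<Sum>d\<in>B. representation B (J b) d *\<^sub>R d) c"
        using repsum[OF JbW] by simp
      also have "\<dots> = (\<Sum>d\<in>B. representation B (J b) d * g d c)"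
        by (simp add: gsum gscale)
      also have "\<dots> = (\<Sum>d\<in>B. representation B (J b) d * g c d)"
        by (intro sum.cong refl) (metis g_sym)
      finally show "ginv b c * g (J b) c = ginv b c * (\<Sum>d\<in>B. representation B (J b) d * g c d)"
        by simp
    qed
    also have "\<dots> = (\<Sum>d\<in>B. representation B (J b) d * (\<Sum>c\<in>B. ginv b c * g c d))"
    proof -
      have "(\<Sum>c\<in>B. ginv b c * (\<Sum>d\<in>B. representation B (J b) d * g c d))
          = (\<Sum>c\<in>B. \<Sum>d\<in>B. representation B (J b) d * (ginv b c * g c d))"
        by (simp add: sum_distrib_left mult.left_commute)
      also have "\<dots> = (\<Sum>d\<in>B. \<Sum>c\<in>B. representation B (J b) d * (ginv b c * g c d))"
        by (rule sum.swap)
      also have "\<dots> = (\<Sum>d\<in>B. representation B (J b) d * (\<Sum>c\<in>B. ginv b c * g c d))"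
        by (simp add: sum_distrib_left)
      finally show ?thesis .
    qed
    also have "\<dots> = (\<Sum>d\<in>B. representation B (J b) d * (if b = d then 1 else 0))"
      using ginvP[OF bB] by simp
    also have "\<dots> = representation B (J b) b" using bB Bfin
      by (simp add: if_distrib sum.delta cong: if_cong)
    finally show ?thesis .
  qed
  have "g_trace g W \<sigma> = (\<Sum>b\<in>B. \<Sum>c\<in>B. (ginv b c * g b c) *\<^sub>R h - (ginv b c * g (J b) c) *\<^sub>R J h)"
    unfolding GT
  proof (intro sum.cong refl)
    fix b c assume "b \<in> B" "c \<in> B"
    hence "b \<in> W" "c \<in> W" using BW by auto
    thus "ginv b c *\<^sub>R \<sigma> b c = (ginv b c * g b c) *\<^sub>R h - (ginv b c * g (J b) c) *\<^sub>R J h"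
      by (simp add: hyp' scaleR_diff_right)
  qed
  also have "\<dots> = (\<Sum>b\<in>B. (\<Sum>c\<in>B. ginv b c * g b c) *\<^sub>R h - (\<Sum>c\<in>B. ginv b c * g (J b) c) *\<^sub>R J h)"
    by (simp add: sum_subtractf scaleR_sum_left)
  also have "\<dots> = (\<Sum>b\<in>B. h - representation B (J b) b *\<^sub>R J h)"
    by (intro sum.cong refl) (simp add: S1 S2)
  also have "\<dots> = real (2 * n) *\<^sub>R h - tJ *\<^sub>R J h"
    by (simp add: sum_subtractf tJ_def scaleR_sum_left Bcard sum_constant_scaleR)
  finally have GT2: "g_trace g W \<sigma> = real (2 * n) *\<^sub>R h - tJ *\<^sub>R J h" .
  have "g_trace g W \<sigma> = real (2 * n) *\<^sub>R h" unfolding h_def using n_pos by simp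
  hence tJh: "tJ *\<^sub>R J h = 0" using GT2 by simp
  show ?thesis
  proof (intro ballI allI impI)
    fix \<eta> A x
    assume \<eta>N: "\<eta> \<in> normal_space g W"
      and AA: "(\<forall>x\<in>W. A x \<in> W) \<and> (\<forall>x\<in>W. \<forall>y\<in>W. g (A x) y = g (\<sigma> x y) \<eta>)"
      and xW: "x \<in> W"
    define a where "a = g h \<eta>"
    define c where "c = g (J h) \<eta>"
    have Aform: "A z = a *\<^sub>R z - c *\<^sub>R J z" if zW: "z \<in> W" for z
    proof -
      have JzW: "J z \<in> W" using W_J zW by simp
      have mem: "A z - (a *\<^sub>R z - c *\<^sub>R J z) \<in> W"
        using AA zW JzW by (intro Wdiff Wscale) auto
      have "\<forall>y\<in>W. g (A z - (a *\<^sub>R z - c *\<^sub>R J z)) y = 0"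
      proof
        fix y assume yW: "y \<in> W"
        have "g (A z) y = g (\<sigma> z y) \<eta>" using AA zW yW by blast
        also have "\<dots> = g z y * a - g (J z) y * c"
          using hyp'[OF zW yW] by (simp add: gdiff gscale a_def c_def)
        finally show "g (A z - (a *\<^sub>R z - c *\<^sub>R J z)) y = 0"
          by (simp add: gdiff gscale)
      qed
      hence "A z - (a *\<^sub>R z - c *\<^sub>R J z) = 0" using W_nondeg mem by blast
      thus ?thesis by simp
    qed
    have tr1: "sub_trace W A = a * real (2 * n) - c * tJ"
    proof -
      have "sub_trace W A = (\<Sum>b\<in>B. representation B (a *\<^sub>R b - c *\<^sub>R J b) b)"
        unfolding sub_trace_def Let_def B_def[symmetric] using BW
        by (intro sum.cong refl) (auto simp: Aform)
      also have "\<dots> = (\<Sum>b\<in>B. a * representation B b b - c * representation B (J b) b)"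
        using BW W_J
        by (intro sum.cong refl)
           (simp add: representation_diff[OF Bind] representation_scale[OF Bind] inspan Wscale subset_iff)
      also have "\<dots> = a * real (2 * n) - c * tJ"
        by (simp add: sum_subtractf sum_distrib_left[symmetric] tJ_def repbasis Bcard)
      finally show ?thesis .
    qed
    have tr2: "sub_trace W (A \<circ> J) = a * tJ + c * real (2 * n)"
    proof -
      have "sub_trace W (A \<circ> J) = (\<Sum>b\<in>B. representation B (a *\<^sub>R J b + c *\<^sub>R b) b)"
        unfolding sub_trace_def Let_def B_def[symmetric] using BW W_J
        by (intro sum.cong refl) (auto simp: Aform J_sq subset_iff)
      also have "\<dots> = (\<Sum>b\<in>B. a * representation B (J b) b + c * representation B b b)"
        using BW W_J
        by (intro sum.cong refl)
           (simp add: representation_add[OF Bind] representation_scale[OF Bind] inspan Wscale subset_iff)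
      also have "\<dots> = a * tJ + c * real (2 * n)"
        by (simp add: sum.distrib sum_distrib_left[symmetric] tJ_def repbasis Bcard)
      finally show ?thesis .
    qed
    show "A x = (sub_trace W A / real (2 * n)) *\<^sub>R x - (sub_trace W (A \<circ> J) / real (2 * n)) *\<^sub>R J x"
    proof (cases "tJ = 0")
      case True
      thus ?thesis using n_pos by (simp add: tr1 tr2 Aform[OF xW])
    next
      case False
      hence "J h = 0" using tJh by simp
      hence "h = 0" using J_sq[of h] J0 by simp
      hence "a = 0" "c = 0" unfolding a_def c_def using g0 J0 by auto
      thus ?thesis by (simp add: tr1 tr2 Aform[OF xW])
    qed
  qed
qed

end
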